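(* Let $n\ge 1$, $\gamma>0$, and let $A:[0,1]^{2n}\to\mathbb{R}_+^{n\times n}$ be a $\mathcal C^1$ matrix-valued function. Consider the system of ordinary differential equations $$\dot{x}_i = - x_i\sum_{j=1}^n A_{ij}(x,y)\, y_j,\qquad \dot{y}_i = x_i \sum_{j=1}^n A_{ij}(x,y)\, y_j - \gamma y_i,\qquad i=1,\ldots,n,$$ with state $(x,y)\in\mathbb{R}^n\times\mathbb{R}^n$, and let $\mathcal S=\{(x,y)\in[0,1]^{2n}: x+y\le \mathbf 1\}$. Then: (i) for every initial condition $(x(0),y(0))\in\mathcal S$ there exists a unique solution $(x(t),y(t))$, which is $\mathcal C^1$ and belongs to $\mathcal S$ for every $t\ge 0$; (ii) for every $i$, $x_i(t)$ is non-increasing for $t\ge 0$, and $x_i(0)>0$ if and only if $x_i(t)>0$ for every $t\ge0$; (iii) for every $i$, if $y_i(0)>0$ then $y_i(t)>0$ for every $t>0$; (iv) the set of equilibrium points of the system in $\mathcal S$ is $\mathcal S^*=\{(x^*,\mathbf 0): x^*\in[0,1]^n\}$; (v) for every initial condition in $\mathcal S$ there exists $x^*\in\mathbb{R}_+^n$ with $\mathbf 0\le x^*\le x(0)$ such that $\lim_{t\to+\infty}(x(t),y(t))=(x^*,\mathbf 0)\in\mathcal S^*$.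
   Context: Vector inequalities are entrywise; $\mathbf 1$ and $\mathbf 0$ denote the all-ones and all-zeros vectors in $\mathbb{R}^n$. $x_i$ and $y_i$ represent the fractions of susceptible and infected agents in subpopulation $i$. *)

theory Defs
  imports "HOL-Analysis.Analysis"
begin

definition sir_cube :: "((real^'n) \<times> (real^'n)) set" where
  "sir_cube = {z. \<forall>i. 0 \<le> fst z $ i \<and> fst z $ i \<le> 1 \<and> 0 \<le> snd z $ i \<and> snd z $ i \<le> 1}"

definition sir_S :: "((real^'n) \<times> (real^'n)) set" where
  "sir_S = {z \<in> sir_cube. \<forall>i. fst z $ i + snd z $ i \<le> 1}"

definition sir_field ::
  "((real^'n) \<times> (real^'n) \<Rightarrow> real^'n^'n) \<Rightarrow> real \<Rightarrow> (real^'n) \<times> (real^'n) \<Rightarrow> (real^'n) \<times> (real^'n)" where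
  "sir_field A \<gamma> z =
     ((\<chi> i. - (fst z $ i) * (\<Sum>j\<in>UNIV. A z $ i $ j * snd z $ j)),
      (\<chi> i. (fst z $ i) * (\<Sum>j\<in>UNIV. A z $ i $ j * snd z $ j) - \<gamma> * snd z $ i))"

text \<open>A solution on [0,+oo) with initial condition z0; since A is only defined on
  [0,1]^{2n}, solutions are required to stay in [0,1]^{2n}.\<close>
definition is_sir_solution ::
  "((real^'n) \<times> (real^'n) \<Rightarrow> real^'n^'n) \<Rightarrow> real \<Rightarrow> (real^'n) \<times> (real^'n) \<Rightarrow> (real \<Rightarrow> (real^'n) \<times> (real^'n)) \<Rightarrow> bool" where
  "is_sir_solution A \<gamma> z0 sol \<longleftrightarrow>
     sol 0 = z0 \<and>
     (\<forall>t\<ge>0. sol t \<in> sir_cube \<and>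
        (sol has_vector_derivative sir_field A \<gamma> (sol t)) (at t within {0..}))"

end

theory Submission
  imports Defs
begin

lemma vd_fst_nth:
  fixes f :: "real \<Rightarrow> (real^'n) \<times> (real^'m)" and i :: 'n
  assumes "(f has_vector_derivative v) F"
  shows "((\<lambda>t. fst (f t) $ i) has_real_derivative (fst v $ i)) F"
proof -
  have bl: "bounded_linear (\<lambda>z::(real^'n)\<times>(real^'m). fst z $ i)"
    using bounded_linear_compose[OF bounded_linear_vec_nth[of i] bounded_linear_fst] by (simp add: o_def)
  show ?thesis
    using bounded_linear.has_vector_derivative[OF bl assms]
    by (simp add: has_real_derivative_iff_has_vector_derivative)
qed

lemma vd_snd_nth:
  fixes f :: "real \<Rightarrow> (real^'n) \<times> (real^'m)" and i :: 'm
  assumes "(f has_vector_derivative v) F"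
  shows "((\<lambda>t. snd (f t) $ i) has_real_derivative (snd v $ i)) F"
proof -
  have bl: "bounded_linear (\<lambda>z::(real^'n)\<times>(real^'m). snd z $ i)"
    using bounded_linear_compose[OF bounded_linear_vec_nth[of i] bounded_linear_snd] by (simp add: o_def)
  show ?thesis
    using bounded_linear.has_vector_derivative[OF bl assms]
    by (simp add: has_real_derivative_iff_has_vector_derivative)
qed

lemma deriv_nonneg_mono:
  fixes f :: "real \<Rightarrow> real"
  assumes "a \<le> b"
    and "\<And>s. s \<in> {a..b} \<Longrightarrow> (f has_real_derivative f' s) (at s within {a..b})"
    and "\<And>s. s \<in> {a..b} \<Longrightarrow> f' s \<ge> 0"
  shows "f a \<le> f b"
proof -
  have "\<And>x. a \<le> x \<Longrightarrow> x \<le> b \<Longrightarrow> (f has_derivative (\<lambda>h. h * f' x)) (at x within {a..b})"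
    using assms(2) by (metis atLeastAtMost_iff has_field_derivative_def mult_commute_abs)
  from mvt_very_simple[OF assms(1) this] obtain x where x: "x \<in> {a..b}" "f b - f a = (b - a) * f' x"
    by blast
  have "(b - a) * f' x \<ge> 0" using assms(1) assms(3)[OF x(1)] by simp
  with x show ?thesis by simp
qed

lemma barrier:
  fixes f f' :: "real \<Rightarrow> real"
  assumes ab: "a \<le> b" and cont: "continuous_on {a..b} f"
    and der: "\<And>s. a < s \<Longrightarrow> s < b \<Longrightarrow> (f has_real_derivative f' s) (at s)"
    and sgn: "\<And>s. a < s \<Longrightarrow> s < b \<Longrightarrow> f s < 0 \<Longrightarrow> f' s \<ge> 0"
    and fa: "f a \<ge> 0"
  shows "f b \<ge> 0"
proof (rule ccontr)
  assume nb: "\<not> f b \<ge> 0"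
  define S where "S = {a..b} \<inter> f -` {0..}"
  have cS: "closed S" unfolding S_def
    by (rule continuous_closed_preimage[OF cont]) auto
  have bS: "bdd_above S" unfolding S_def by auto
  have aS: "a \<in> S" using ab fa unfolding S_def by auto
  define s where "s = Sup S"
  have sS: "s \<in> S" unfolding s_def using closed_contains_Sup[OF _ bS cS] aS by auto
  have sb: "s < b" using sS nb unfolding S_def by (cases "s = b") auto
  have as: "a \<le> s" using sS unfolding S_def by auto
  have neg: "f t < 0" if "s < t" "t \<le> b" for t
  proof (rule ccontr)
    assume "\<not> f t < 0"
    then have "t \<in> S" using that as unfolding S_def by auto
    then have "t \<le> s" unfolding s_def using bS by (rule cSup_upper)
    with that show False by simp
  qed
  have cs: "continuous_on {s..b} f" by (rule continuous_on_subset[OF cont]) (use as in auto)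
  have dif: "f differentiable (at x)" if "s < x" "x < b" for x
  proof -
    have "a < x" using as that by linarith
    then show ?thesis using der[of x] that unfolding real_differentiable_def by blast
  qed
  from MVT[OF sb cs dif] obtain l z where z: "s < z" "z < b" "DERIV f z :> l" "f b - f s = (b - s) * l"
    by blast
  have az: "a < z" using as z(1) by linarith
  have "l = f' z" using DERIV_unique[OF z(3) der[OF az z(2)]] .
  then have "l \<ge> 0" using sgn[OF az z(2)] neg[of z] z by auto
  then have "(b - s) * l \<ge> 0" using sb by simp
  then have "f b \<ge> f s" using z(4) by linarith
  moreover have "f s \<ge> 0" using sS unfolding S_def by auto
  ultimately show False using nb by simp
qed

lemma sir_cube_cbox: "(sir_cube :: ((real^'n) \<times> (real^'n)) set) = cbox (0,0) (1,1)"
  unfolding sir_cube_def cbox_Pair_eq by (auto simp: mem_box_cart)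

lemma compact_sir_cube: "compact sir_cube"
  by (simp add: sir_cube_cbox)

lemma convex_sir_cube: "convex sir_cube"
  by (simp add: sir_cube_cbox)

definition clamp01 :: "real \<Rightarrow> real" where "clamp01 r = max 0 (min 1 r)"

definition cl :: "(real^'n) \<times> (real^'n) \<Rightarrow> (real^'n) \<times> (real^'n)" where
  "cl z = ((\<chi> i. clamp01 (fst z $ i)), (\<chi> i. clamp01 (snd z $ i)))"

lemma clamp01_lip: "\<bar>clamp01 a - clamp01 b\<bar> \<le> \<bar>a - b\<bar>"
  unfolding clamp01_def by (auto simp: max_def min_def)

lemma clamp01_bounds: "0 \<le> clamp01 a" "clamp01 a \<le> 1"
  unfolding clamp01_def by auto

lemma clamp01_id: "0 \<le> a \<Longrightarrow> a \<le> 1 \<Longrightarrow> clamp01 a = a"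
  unfolding clamp01_def by auto

lemma clamp01_neg: "a \<le> 0 \<Longrightarrow> clamp01 a = 0"
  unfolding clamp01_def by auto

lemma cl_in_cube: "cl z \<in> sir_cube"
  unfolding sir_cube_def cl_def by (auto simp: clamp01_bounds)

lemma cl_id: "z \<in> sir_cube \<Longrightarrow> cl z = z"
  unfolding sir_cube_def cl_def by (auto simp: clamp01_id vec_eq_iff prod_eq_iff)

lemma cl_lip: "norm (cl z - cl w) \<le> norm (z - w)"
proof -
  have 1: "norm (fst (cl z) - fst (cl w)) \<le> norm (fst z - fst w)"
    by (rule norm_le_componentwise_cart) (simp add: cl_def clamp01_lip)
  have 2: "norm (snd (cl z) - snd (cl w)) \<le> norm (snd z - snd w)"
    by (rule norm_le_componentwise_cart) (simp add: cl_def clamp01_lip)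
  have "norm (cl z - cl w) = sqrt ((norm (fst (cl z) - fst (cl w)))\<^sup>2 + (norm (snd (cl z) - snd (cl w)))\<^sup>2)"
    by (metis fst_diff norm_Pair prod.collapse snd_diff)
  also have "\<dots> \<le> sqrt ((norm (fst z - fst w))\<^sup>2 + (norm (snd z - snd w))\<^sup>2)"
    using 1 2 by (intro real_sqrt_le_mono add_mono power_mono) auto
  also have "\<dots> = norm (z - w)"
    by (metis fst_diff norm_Pair prod.collapse snd_diff)
  finally show ?thesis .
qed

lemma abs_fst_nth_le: "\<bar>fst p $ i\<bar> \<le> norm p"
  by (metis component_le_norm_cart norm_fst_le order_trans prod.collapse)

lemma abs_snd_nth_le: "\<bar>snd p $ i\<bar> \<le> norm p"
  by (metis component_le_norm_cart norm_snd_le order_trans prod.collapse)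

lemma prod_bound:
  fixes a1 a2 b1 b2 p q r s :: real
  assumes "abs (a1 - a2) \<le> p" "abs b1 \<le> q" "abs a2 \<le> r" "abs (b1 - b2) \<le> s"
  shows "abs (a1 * b1 - a2 * b2) \<le> p * q + r * s"
proof -
  have "a1 * b1 - a2 * b2 = (a1 - a2) * b1 + a2 * (b1 - b2)" by (simp add: algebra_simps)
  then have "abs (a1 * b1 - a2 * b2) \<le> abs (a1 - a2) * abs b1 + abs a2 * abs (b1 - b2)"
    by (metis abs_mult abs_triangle_ineq)
  also have "\<dots> \<le> p * q + r * s"
    using assms by (intro add_mono mult_mono) auto
  finally show ?thesis .
qed

locale sirsys =
  fixes A :: "(real^'n) \<times> (real^'n) \<Rightarrow> real^'n^'n"
    and A' :: "(real^'n) \<times> (real^'n) \<Rightarrow> ((real^'n) \<times> (real^'n)) \<Rightarrow>\<^sub>L (real^'n^'n)"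
    and \<gamma> :: real
  assumes gamma_pos: "\<gamma> > 0"
    and A_nonneg: "\<forall>z\<in>sir_cube. \<forall>i j. 0 \<le> A z $ i $ j"
    and A_deriv: "\<forall>z\<in>sir_cube. (A has_derivative blinfun_apply (A' z)) (at z within sir_cube)"
    and A'_cont: "continuous_on sir_cube A'"
begin

definition G where "G z = sir_field A \<gamma> (cl z)"

abbreviation "F \<equiv> sir_field A \<gamma>"

lemma A_cont: "continuous_on sir_cube A"
  using A_deriv by (intro has_derivative_continuous_on) auto

lemma A_bound: obtains MA where "MA \<ge> 0" "\<And>z i j. z \<in> sir_cube \<Longrightarrow> \<bar>A z $ i $ j\<bar> \<le> MA"
proof -
  have "bounded (A ` sir_cube)"
    by (intro compact_imp_bounded compact_continuous_image A_cont compact_sir_cube)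
  then obtain B where B: "\<And>z. z \<in> sir_cube \<Longrightarrow> norm (A z) \<le> B"
    unfolding bounded_iff by auto
  have "\<bar>A z $ i $ j\<bar> \<le> B" if "z \<in> sir_cube" for z i j
    using order_trans[OF component_le_norm_cart Finite_Cartesian_Product.norm_nth_le, of "A z" i j] B[OF that] by linarith
  moreover have "B \<ge> 0" using B[of 0] by (auto simp: sir_cube_def) (meson norm_ge_zero order_trans)
  ultimately show ?thesis using that by blast
qed

lemma A_lip: obtains LA where "LA \<ge> 0"
  "\<And>z w i j. z \<in> sir_cube \<Longrightarrow> w \<in> sir_cube \<Longrightarrow> \<bar>A z $ i $ j - A w $ i $ j\<bar> \<le> LA * norm (z - w)"
proof -
  have "bounded (A' ` sir_cube)"
    by (intro compact_imp_bounded compact_continuous_image A'_cont compact_sir_cube)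
  then obtain B where B: "\<And>z. z \<in> sir_cube \<Longrightarrow> norm (A' z) \<le> B"
    unfolding bounded_iff by auto
  have B0: "B \<ge> 0" using B[of 0] by (auto simp: sir_cube_def) (meson norm_ge_zero order_trans)
  have n: "norm (A z - A w) \<le> B * norm (z - w)" if "z \<in> sir_cube" "w \<in> sir_cube" for z w
    using differentiable_bound[OF convex_sir_cube, of A "\<lambda>z. blinfun_apply (A' z)" B z w]
      A_deriv B that by (auto simp: norm_blinfun.rep_eq)
  have "\<bar>A z $ i $ j - A w $ i $ j\<bar> \<le> B * norm (z - w)" if "z \<in> sir_cube" "w \<in> sir_cube" for z w i j
  proof -
    have "\<bar>A z $ i $ j - A w $ i $ j\<bar> = \<bar>(A z - A w) $ i $ j\<bar>" by simp
    also have "\<dots> \<le> norm (A z - A w)"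
      by (rule order_trans[OF component_le_norm_cart Finite_Cartesian_Product.norm_nth_le])
    finally show ?thesis using n[OF that] by linarith
  qed
  then show ?thesis using that B0 by blast
qed

end

context sirsys begin

lemma F_fst: "fst (F z) $ i = - (fst z $ i) * (\<Sum>j\<in>UNIV. A z $ i $ j * snd z $ j)"
  by (simp add: sir_field_def)

lemma F_snd: "snd (F z) $ i = (fst z $ i) * (\<Sum>j\<in>UNIV. A z $ i $ j * snd z $ j) - \<gamma> * snd z $ i"
  by (simp add: sir_field_def)

lemma F_lip: obtains L where "L > 0"
  "\<And>z w. z \<in> sir_cube \<Longrightarrow> w \<in> sir_cube \<Longrightarrow> norm (F z - F w) \<le> L * norm (z - w)"
proof -
  obtain MA where MA: "MA \<ge> 0" "\<And>z i j. z \<in> sir_cube \<Longrightarrow> \<bar>A z $ i $ j\<bar> \<le> MA" by (rule A_bound) blast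
  obtain LA where LA: "LA \<ge> 0"
    "\<And>z w i j. z \<in> sir_cube \<Longrightarrow> w \<in> sir_cube \<Longrightarrow> \<bar>A z $ i $ j - A w $ i $ j\<bar> \<le> LA * norm (z - w)"
    by (rule A_lip) blast
  define N where "N = real CARD('n)"
  define K1 where "K1 = N * MA + N * (LA + MA)"
  define L where "L = N * K1 + N * (K1 + \<gamma>) + 1"
  have N0: "N \<ge> 0" unfolding N_def by simp
  have K10: "K1 \<ge> 0" unfolding K1_def using N0 MA LA by simp
  have "0 \<le> N * K1 + N * (K1 + \<gamma>)" using N0 K10 gamma_pos by (simp add: mult_nonneg_nonneg)
  then have L0: "L > 0" unfolding L_def by linarith
  have main: "norm (F z - F w) \<le> L * norm (z - w)" if z: "z \<in> sir_cube" and w: "w \<in> sir_cube" for z w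
  proof -
    define d where "d = norm (z - w)"
    have d0: "d \<ge> 0" unfolding d_def by simp
    have zb: "0 \<le> fst z $ i" "fst z $ i \<le> 1" "0 \<le> snd z $ i" "snd z $ i \<le> 1" for i
      using z unfolding sir_cube_def by auto
    have wb: "0 \<le> fst w $ i" "fst w $ i \<le> 1" "0 \<le> snd w $ i" "snd w $ i \<le> 1" for i
      using w unfolding sir_cube_def by auto
    have dx: "\<bar>fst z $ i - fst w $ i\<bar> \<le> d" for i
      unfolding d_def using abs_fst_nth_le[of "z - w" i] by simp
    have dy: "\<bar>snd z $ i - snd w $ i\<bar> \<le> d" for i
      unfolding d_def using abs_snd_nth_le[of "z - w" i] by simp
    define Sz where "Sz i = (\<Sum>j\<in>UNIV. A z $ i $ j * snd z $ j)" for i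
    define Sw where "Sw i = (\<Sum>j\<in>UNIV. A w $ i $ j * snd w $ j)" for i
    have Szb: "\<bar>Sz i\<bar> \<le> N * MA" for i
    proof -
      have "\<bar>Sz i\<bar> \<le> (\<Sum>j\<in>UNIV. \<bar>A z $ i $ j * snd z $ j\<bar>)" unfolding Sz_def by (rule sum_abs)
      also have "\<dots> \<le> N * MA" unfolding N_def
      proof (rule sum_bounded_above)
        fix j
        have "\<bar>A z $ i $ j * snd z $ j\<bar> = \<bar>A z $ i $ j\<bar> * \<bar>snd z $ j\<bar>" by (rule abs_mult)
        also have "\<dots> \<le> MA * 1" using MA(1) MA(2)[OF z] zb by (intro mult_mono) auto
        finally show "\<bar>A z $ i $ j * snd z $ j\<bar> \<le> MA" by simp
      qed
      finally show ?thesis .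
    qed
    have Sd: "\<bar>Sz i - Sw i\<bar> \<le> N * ((LA + MA) * d)" for i
    proof -
      have "\<bar>Sz i - Sw i\<bar> = \<bar>\<Sum>j\<in>UNIV. A z $ i $ j * snd z $ j - A w $ i $ j * snd w $ j\<bar>"
        unfolding Sz_def Sw_def by (simp add: sum_subtractf)
      also have "\<dots> \<le> (\<Sum>j\<in>UNIV. \<bar>A z $ i $ j * snd z $ j - A w $ i $ j * snd w $ j\<bar>)" by (rule sum_abs)
      also have "\<dots> \<le> N * ((LA + MA) * d)" unfolding N_def
      proof (rule sum_bounded_above)
        fix j
        have "\<bar>A z $ i $ j * snd z $ j - A w $ i $ j * snd w $ j\<bar> \<le> (LA * d) * 1 + MA * d"
          by (rule prod_bound) (use LA(2)[OF z w] MA(2)[OF w] zb dy in \<open>auto simp: d_def\<close>)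
        then show "\<bar>A z $ i $ j * snd z $ j - A w $ i $ j * snd w $ j\<bar> \<le> (LA + MA) * d"
          by (simp add: algebra_simps)
      qed
      finally show ?thesis .
    qed
    have c1: "\<bar>fst z $ i * Sz i - fst w $ i * Sw i\<bar> \<le> K1 * d" for i
    proof -
      have "\<bar>fst z $ i * Sz i - fst w $ i * Sw i\<bar> \<le> d * (N * MA) + 1 * (N * ((LA + MA) * d))"
        by (rule prod_bound) (use dx Szb wb Sd in auto)
      then show ?thesis unfolding K1_def by (simp add: algebra_simps)
    qed
    have f1: "\<bar>fst (F z - F w) $ i\<bar> \<le> K1 * d" for i
    proof -
      have "fst (F z - F w) $ i = - (fst z $ i * Sz i - fst w $ i * Sw i)"
        unfolding Sz_def Sw_def by (simp add: F_fst algebra_simps)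
      then show ?thesis using c1[of i] by simp
    qed
    have f2: "\<bar>snd (F z - F w) $ i\<bar> \<le> (K1 + \<gamma>) * d" for i
    proof -
      have "snd (F z - F w) $ i = (fst z $ i * Sz i - fst w $ i * Sw i) - \<gamma> * (snd z $ i - snd w $ i)"
        unfolding Sz_def Sw_def by (simp add: F_snd algebra_simps)
      moreover have "\<bar>(fst z $ i * Sz i - fst w $ i * Sw i) - \<gamma> * (snd z $ i - snd w $ i)\<bar> \<le> \<bar>fst z $ i * Sz i - fst w $ i * Sw i\<bar> + \<gamma> * \<bar>snd z $ i - snd w $ i\<bar>"
        using abs_triangle_ineq4[of "fst z $ i * Sz i - fst w $ i * Sw i" "\<gamma> * (snd z $ i - snd w $ i)"] gamma_pos
        by (simp add: abs_mult)
      ultimately have "\<bar>snd (F z - F w) $ i\<bar> \<le> \<bar>fst z $ i * Sz i - fst w $ i * Sw i\<bar> + \<gamma> * \<bar>snd z $ i - snd w $ i\<bar>"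
        by simp
      also have "\<dots> \<le> K1 * d + \<gamma> * d" using c1[of i] dy[of i] gamma_pos
        by (intro add_mono mult_left_mono) auto
      finally show ?thesis by (simp add: algebra_simps)
    qed
    have n1: "norm (fst (F z - F w)) \<le> N * (K1 * d)"
      using norm_le_l1_cart[of "fst (F z - F w)"] sum_bounded_above[of UNIV "\<lambda>i. \<bar>fst (F z - F w) $ i\<bar>" "K1 * d"] f1
      unfolding N_def by auto
    have n2: "norm (snd (F z - F w)) \<le> N * ((K1 + \<gamma>) * d)"
      using norm_le_l1_cart[of "snd (F z - F w)"] sum_bounded_above[of UNIV "\<lambda>i. \<bar>snd (F z - F w) $ i\<bar>" "(K1 + \<gamma>) * d"] f2
      unfolding N_def by auto
    have "norm (F z - F w) \<le> norm (fst (F z - F w)) + norm (snd (F z - F w))"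
      by (metis norm_Pair_le prod.collapse)
    also have "\<dots> \<le> N * (K1 * d) + N * ((K1 + \<gamma>) * d)" using n1 n2 by simp
    also have "\<dots> \<le> L * d" unfolding L_def using d0 by (simp add: algebra_simps)
    finally show ?thesis unfolding d_def .
  qed
  show ?thesis using that L0 main by blast
qed

end

lemma int_cont:
  fixes h :: "real \<Rightarrow> 'a::banach"
  assumes "continuous_on UNIV h"
  shows "continuous_on UNIV (\<lambda>t. integral {0..max 0 t} h)"
proof (rule continuous_at_imp_continuous_on, intro ballI)
  fix t0 :: real
  define b where "b = \<bar>t0\<bar> + 1"
  have b0: "b > 0" unfolding b_def by simp
  have c1: "continuous_on {0..b} (\<lambda>x. integral {0..x} h)"
    by (rule indefinite_integral_continuous_1, rule integrable_continuous_real,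
        rule continuous_on_subset[OF assms]) simp
  have cm: "continuous_on {-b..b} (\<lambda>t::real. max 0 t)"
    by (intro continuous_intros)
  have im: "(\<lambda>t::real. max 0 t) ` {-b..b} \<subseteq> {0..b}" using b0 by auto
  have c2: "continuous_on {-b..b} (\<lambda>t. integral {0..max 0 t} h)"
    by (rule continuous_on_compose2[OF c1 cm im])
  have "t0 \<in> {-b<..<b}" unfolding b_def by auto
  then have "t0 \<in> interior {-b..b}" by simp
  then show "isCont (\<lambda>t. integral {0..max 0 t} h) t0" using continuous_on_interior[OF c2] by blast
qed

lemma int_deriv:
  fixes h :: "real \<Rightarrow> 'a::banach"
  assumes "continuous_on UNIV h" "t \<ge> 0"
  shows "((\<lambda>s. z0 + integral {0..s} h) has_vector_derivative h t) (at t within {0..})"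
proof -
  have "((\<lambda>s. integral {0..s} h) has_vector_derivative h t) (at t within {0..t+1})"
    by (rule integral_has_vector_derivative) (use assms continuous_on_subset in auto)
  moreover have "at t within {0..t+1} = at t within {0..}"
    by (rule at_within_nhd[where S="{..<t+1}"]) auto
  ultimately have "((\<lambda>s. integral {0..s} h) has_vector_derivative h t) (at t within {0..})" by simp
  then show ?thesis by (simp add: has_vector_derivative_add_const add.commute[of z0])
qed

lemma l1: fixes a E :: real assumes "E \<ge> 1" "a \<ge> 0" shows "a / E \<le> a"
  using assms by (simp add: divide_le_eq mult_le_cancel_left1)
lemma l2: fixes t M E lam :: real assumes "E \<ge> 1" "lam > 0" "M \<ge> 0" "lam * t \<le> E" shows "t * M / E \<le> M / lam"
proof -
  have "M * (lam * t) \<le> M * E" by (rule mult_left_mono[OF assms(4) assms(3)])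
  then show ?thesis using assms(1,2) by (simp add: divide_simps algebra_simps)
qed
lemma l3: fixes lam t :: real shows "exp (- lam * t) = 1 / exp (lam * t)"
  by (simp add: exp_minus divide_inverse)
lemma l4: fixes x :: "'a::real_normed_vector" assumes "norm y \<le> b" shows "norm (x + y) \<le> norm x + b"
  using norm_triangle_ineq[of x y] assms by linarith

context sirsys begin

lemma F_zero: "F 0 = 0" by (simp add: sir_field_def prod_eq_iff vec_eq_iff)

lemma G_eq_F: "z \<in> sir_cube \<Longrightarrow> G z = F z" by (simp add: G_def cl_id)

definition LG where "LG = (SOME L. L > 0 \<and> (\<forall>z\<in>sir_cube. \<forall>w\<in>sir_cube. norm (F z - F w) \<le> L * norm (z - w)))"

lemma LG: "LG > 0" "\<forall>z\<in>sir_cube. \<forall>w\<in>sir_cube. norm (F z - F w) \<le> LG * norm (z - w)"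
proof -
  obtain L where "L > 0" "\<And>z w. z \<in> sir_cube \<Longrightarrow> w \<in> sir_cube \<Longrightarrow> norm (F z - F w) \<le> L * norm (z - w)"
    by (rule F_lip) blast
  then have ex: "\<exists>L. L > 0 \<and> (\<forall>z\<in>sir_cube. \<forall>w\<in>sir_cube. norm (F z - F w) \<le> L * norm (z - w))" by blast
  show "LG > 0" "\<forall>z\<in>sir_cube. \<forall>w\<in>sir_cube. norm (F z - F w) \<le> LG * norm (z - w)"
    using someI_ex[OF ex] unfolding LG_def by auto
qed

lemma G_lip: "norm (G z - G w) \<le> LG * norm (z - w)"
proof -
  have "norm (G z - G w) \<le> LG * norm (cl z - cl w)"
    unfolding G_def by (rule LG(2)[rule_format, OF cl_in_cube cl_in_cube])
  also have "\<dots> \<le> LG * norm (z - w)" by (rule mult_left_mono[OF cl_lip]) (use LG(1) in simp)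
  finally show ?thesis .
qed

lemma G_cont: "continuous_on UNIV G"
proof (rule lipschitz_on_continuous_on)
  show "LG-lipschitz_on UNIV G"
    unfolding lipschitz_on_def using LG(1) G_lip by (auto simp: dist_norm)
qed

lemma G_bound: obtains M where "M \<ge> 0" "\<And>z. norm (G z) \<le> M"
proof -
  obtain R where R: "\<forall>z\<in>(sir_cube::((real^'n)\<times>(real^'n)) set). norm z \<le> R"
    using compact_imp_bounded[OF compact_sir_cube] unfolding bounded_iff by blast
  have z0: "(0::(real^'n)\<times>(real^'n)) \<in> sir_cube" by (simp add: sir_cube_def)
  have "norm (G z) \<le> LG * max R 0" for z
  proof -
    have "norm (G z) = norm (F (cl z) - F 0)" by (simp add: G_def F_zero)
    also have "\<dots> \<le> LG * norm (cl z - 0)" by (rule LG(2)[rule_format, OF cl_in_cube z0])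
    also have "\<dots> \<le> LG * max R 0"
    proof -
      have "norm (cl z) \<le> R" by (rule R[rule_format, OF cl_in_cube])
      then show ?thesis using LG(1) by (intro mult_left_mono) auto
    qed
    finally show ?thesis .
  qed
  moreover have "LG * max R 0 \<ge> 0" using LG(1) by simp
  ultimately show ?thesis using that by blast
qed

definition lam where "lam = 2 * LG"

lemma lam_pos: "lam > 0" unfolding lam_def using LG(1) by simp

definition Pf :: "(real^'n) \<times> (real^'n) \<Rightarrow> (real \<Rightarrow>\<^sub>C ((real^'n) \<times> (real^'n))) \<Rightarrow> real \<Rightarrow> (real^'n) \<times> (real^'n)" where
  "Pf z0 f t = exp (- lam * max 0 t) *\<^sub>R (z0 + integral {0..max 0 t} (\<lambda>s. G (exp (lam * s) *\<^sub>R apply_bcontfun f s)))"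

lemma h_cont: "continuous_on UNIV (\<lambda>s. G (exp (lam * s) *\<^sub>R apply_bcontfun f s))"
  by (rule continuous_on_compose2[OF G_cont])
     (auto intro!: continuous_on_scaleR continuous_intros continuous_on_apply_bcontfun)

lemma Pf_bcontfun: "Pf z0 f \<in> bcontfun"
proof -
  obtain M where M: "M \<ge> 0" "\<And>z. norm (G z) \<le> M" by (rule G_bound) blast
  let ?h = "\<lambda>s. G (exp (lam * s) *\<^sub>R apply_bcontfun f s)"
  have ic: "continuous_on UNIV (\<lambda>t. integral {0..max 0 t} ?h)" by (rule int_cont[OF h_cont])
  have ce: "continuous_on UNIV (\<lambda>t::real. exp (- lam * max 0 t))" by (intro continuous_intros)
  have c: "continuous_on UNIV (Pf z0 f)"
    unfolding Pf_def
    by (rule continuous_on_scaleR[OF ce continuous_on_add[OF continuous_on_const ic]])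
  have b: "norm (Pf z0 f t) \<le> norm z0 + M / lam" for t
  proof -
    define \<tau> where "\<tau> = max 0 t"
    have \<tau>0: "\<tau> \<ge> 0" unfolding \<tau>_def by simp
    have hi: "?h integrable_on {0..\<tau>}"
      by (rule integrable_continuous_real, rule continuous_on_subset[OF h_cont]) simp
    have "norm (integral {0..\<tau>} ?h) \<le> integral {0..\<tau>} (\<lambda>s. M)"
      by (rule integral_norm_bound_integral[OF hi integrable_const_ivl]) (rule M(2))
    also have "\<dots> = \<tau> * M" using \<tau>0 by simp
    finally have I: "norm (integral {0..\<tau>} ?h) \<le> \<tau> * M" .
    have n1: "norm (z0 + integral {0..\<tau>} ?h) \<le> norm z0 + \<tau> * M" by (rule l4[OF I])
    define E where "E = exp (lam * \<tau>)"
    have E1: "E \<ge> 1" unfolding E_def using lam_pos \<tau>0 by simp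
    have E2: "lam * \<tau> \<le> E" unfolding E_def using exp_ge_add_one_self[of "lam * \<tau>"] by linarith
    have "norm (Pf z0 f t) = exp (- lam * \<tau>) * norm (z0 + integral {0..\<tau>} ?h)"
      unfolding Pf_def \<tau>_def[symmetric] by simp
    also have "\<dots> = (1 / E) * norm (z0 + integral {0..\<tau>} ?h)" unfolding E_def l3 ..
    also have "\<dots> \<le> (1 / E) * (norm z0 + \<tau> * M)"
      using n1 E1 by (intro mult_left_mono) auto
    also have "\<dots> = norm z0 / E + (\<tau> * M) / E" by (simp add: add_divide_distrib)
    also have "\<dots> \<le> norm z0 + M / lam"
      by (rule add_mono[OF l1[OF E1 norm_ge_zero] l2[OF E1 lam_pos M(1) E2]])
    finally show ?thesis .
  qed
  show ?thesis by (rule bcontfun_normI[OF c b])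
qed

definition Psi where "Psi z0 f = Bcontfun (Pf z0 f)"

lemma Psi_apply: "apply_bcontfun (Psi z0 f) = Pf z0 f"
  unfolding Psi_def using Pf_bcontfun Bcontfun_inverse by blast

lemma exp_int: assumes "\<tau> \<ge> 0"
  shows "integral {0..\<tau>} (\<lambda>s. C * exp (lam * s)) = C * (exp (lam * \<tau>) - 1) / lam"
proof -
  have d: "((\<lambda>s. C * exp (lam * s) / lam) has_vector_derivative C * exp (lam * s)) (at s within {0..\<tau>})" for s
  proof -
    have "((\<lambda>s. C * exp (lam * s) / lam) has_real_derivative C * exp (lam * s)) (at s)"
      using lam_pos by (auto intro!: derivative_eq_intros)
    then show ?thesis
      by (simp add: has_real_derivative_iff_has_vector_derivative[symmetric] has_field_derivative_at_within)
  qed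
  have "((\<lambda>s. C * exp (lam * s)) has_integral (C * exp (lam * \<tau>) / lam - C * exp (lam * 0) / lam)) {0..\<tau>}"
    by (rule fundamental_theorem_of_calculus[OF assms d])
  moreover have e: "C * exp (lam * \<tau>) / lam - C * exp (lam * 0) / lam = C * (exp (lam * \<tau>) - 1) / lam"
    by (simp add: right_diff_distrib diff_divide_distrib)
  ultimately have "((\<lambda>s. C * exp (lam * s)) has_integral (C * (exp (lam * \<tau>) - 1) / lam)) {0..\<tau>}"
    by simp
  then show ?thesis by (rule integral_unique)
qed

lemma Psi_contr: "dist (Psi z0 f) (Psi z0 g) \<le> 1/2 * dist f g"
proof (rule dist_bound)
  fix t :: real
  define D where "D = dist f g"
  define \<tau> where "\<tau> = max 0 t"
  have \<tau>0: "\<tau> \<ge> 0" unfolding \<tau>_def by simp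
  let ?hf = "\<lambda>s. G (exp (lam * s) *\<^sub>R apply_bcontfun f s)"
  let ?hg = "\<lambda>s. G (exp (lam * s) *\<^sub>R apply_bcontfun g s)"
  have if1: "?hf integrable_on {0..\<tau>}" by (intro integrable_continuous_real continuous_on_subset[OF h_cont]) auto
  have if2: "?hg integrable_on {0..\<tau>}" by (intro integrable_continuous_real continuous_on_subset[OF h_cont]) auto
  have diff: "Pf z0 f t - Pf z0 g t = exp (- lam * \<tau>) *\<^sub>R integral {0..\<tau>} (\<lambda>s. ?hf s - ?hg s)"
    unfolding Pf_def \<tau>_def[symmetric] Henstock_Kurzweil_Integration.integral_diff[OF if1 if2]
    by (simp add: algebra_simps)
  have pw: "norm (?hf s - ?hg s) \<le> LG * D * exp (lam * s)" for s
  proof -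
    have "norm (?hf s - ?hg s) \<le> LG * norm (exp (lam * s) *\<^sub>R apply_bcontfun f s - exp (lam * s) *\<^sub>R apply_bcontfun g s)"
      by (rule G_lip)
    also have "\<dots> = LG * (exp (lam * s) * dist (apply_bcontfun f s) (apply_bcontfun g s))"
      by (simp add: dist_norm scaleR_right_diff_distrib[symmetric])
    also have "\<dots> \<le> LG * (exp (lam * s) * D)"
      unfolding D_def using LG(1) dist_bounded by (intro mult_left_mono) auto
    finally show ?thesis by (simp add: algebra_simps)
  qed
  have "norm (integral {0..\<tau>} (\<lambda>s. ?hf s - ?hg s)) \<le> integral {0..\<tau>} (\<lambda>s. LG * D * exp (lam * s))"
    by (rule integral_norm_bound_integral)
       (auto intro!: integrable_continuous_real continuous_intros continuous_on_subset[OF h_cont] simp: pw)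
  also have "\<dots> = LG * D * (exp (lam * \<tau>) - 1) / lam" using exp_int[OF \<tau>0] .
  finally have I: "norm (integral {0..\<tau>} (\<lambda>s. ?hf s - ?hg s)) \<le> LG * D * (exp (lam * \<tau>) - 1) / lam" .
  have D0: "D \<ge> 0" unfolding D_def by simp
  have "dist (Pf z0 f t) (Pf z0 g t) = exp (- lam * \<tau>) * norm (integral {0..\<tau>} (\<lambda>s. ?hf s - ?hg s))"
    by (simp add: dist_norm diff)
  also have "\<dots> \<le> exp (- lam * \<tau>) * (LG * D * (exp (lam * \<tau>) - 1) / lam)"
    using I by (intro mult_left_mono) auto
  also have "\<dots> = LG * D * (1 - exp (- lam * \<tau>)) / lam"
    by (simp add: field_simps exp_minus)
  also have "\<dots> \<le> LG * D / lam"
  proof -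
    have "LG * D * (1 - exp (- lam * \<tau>)) \<le> LG * D * 1"
      by (rule mult_left_mono) (use LG(1) D0 in auto)
    then show ?thesis using lam_pos by (simp add: divide_right_mono)
  qed
  also have "\<dots> = 1/2 * D" unfolding lam_def using LG(1) by simp
  finally show "dist (Psi z0 f t) (Psi z0 g t) \<le> 1/2 * dist f g" unfolding D_def Psi_apply .
qed

lemma Psi_fix: "\<exists>!w. Psi z0 w = w"
proof -
  have c: "\<forall>x y. dist (Psi z0 x) (Psi z0 y) \<le> 1/2 * dist x y" by (intro allI, rule Psi_contr)
  show ?thesis by (rule banach_fix_type[where c="1/2", OF _ _ c]) auto
qed

end

context sirsys begin

definition Wf :: "(real \<Rightarrow> (real^'n) \<times> (real^'n)) \<Rightarrow> real \<Rightarrow> (real^'n) \<times> (real^'n)" where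
  "Wf \<phi> = (\<lambda>t. exp (- lam * max 0 t) *\<^sub>R \<phi> (max 0 t))"

lemma Wf_bcontfun:
  fixes \<phi> :: "real \<Rightarrow> (real^'n) \<times> (real^'n)"
  assumes cont: "continuous_on {0..} \<phi>" and bnd: "\<And>t. t \<ge> 0 \<Longrightarrow> norm (\<phi> t) \<le> R"
  shows "Wf \<phi> \<in> bcontfun"
proof (rule bcontfun_normI)
  have c: "continuous_on UNIV (\<lambda>t. \<phi> (max 0 t))"
    by (rule continuous_on_compose2[OF cont]) (auto intro!: continuous_intros)
  show "continuous_on UNIV (Wf \<phi>)" unfolding Wf_def
    by (intro continuous_on_scaleR c) (intro continuous_intros)
  fix t
  have "norm (Wf \<phi> t) = exp (- lam * max 0 t) * norm (\<phi> (max 0 t))" unfolding Wf_def by simp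
  also have "\<dots> \<le> 1 * R"
    using bnd[of "max 0 t"] lam_pos by (intro mult_mono) auto
  finally show "norm (Wf \<phi> t) \<le> R" by simp
qed

lemma fp_of_sol:
  fixes \<phi> :: "real \<Rightarrow> (real^'n) \<times> (real^'n)"
  assumes cont: "continuous_on {0..} \<phi>" and bnd: "\<And>t. t \<ge> 0 \<Longrightarrow> norm (\<phi> t) \<le> R"
    and eq: "\<And>t. t \<ge> 0 \<Longrightarrow> \<phi> t = z0 + integral {0..t} (\<lambda>s. G (\<phi> s))"
  shows "Psi z0 (Bcontfun (Wf \<phi>)) = Bcontfun (Wf \<phi>)"
proof -
  have A: "apply_bcontfun (Bcontfun (Wf \<phi>)) = Wf \<phi>"
    using Wf_bcontfun[OF cont bnd] Bcontfun_inverse by blast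
  show ?thesis
  proof (rule bcontfun_eqI)
    fix t :: real
    define \<tau> where "\<tau> = max 0 t"
    have \<tau>0: "\<tau> \<ge> 0" unfolding \<tau>_def by simp
    have "integral {0..\<tau>} (\<lambda>s. G (exp (lam * s) *\<^sub>R Wf \<phi> s)) = integral {0..\<tau>} (\<lambda>s. G (\<phi> s))"
      by (rule Henstock_Kurzweil_Integration.integral_cong) (simp add: Wf_def exp_minus)
    then have "Pf z0 (Bcontfun (Wf \<phi>)) t = exp (- lam * \<tau>) *\<^sub>R \<phi> \<tau>"
      unfolding Pf_def A \<tau>_def[symmetric] using eq[OF \<tau>0] by simp
    also have "\<dots> = Wf \<phi> t" unfolding Wf_def \<tau>_def by simp
    finally show "apply_bcontfun (Psi z0 (Bcontfun (Wf \<phi>))) t = apply_bcontfun (Bcontfun (Wf \<phi>)) t"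
      unfolding Psi_apply A .
  qed
qed

lemma int_unique:
  fixes \<phi>1 \<phi>2 :: "real \<Rightarrow> (real^'n) \<times> (real^'n)"
  assumes cont1: "continuous_on {0..} \<phi>1" and bnd1: "\<And>t. t \<ge> 0 \<Longrightarrow> norm (\<phi>1 t) \<le> R1"
    and eq1: "\<And>t. t \<ge> 0 \<Longrightarrow> \<phi>1 t = z0 + integral {0..t} (\<lambda>s. G (\<phi>1 s))"
  assumes cont2: "continuous_on {0..} \<phi>2" and bnd2: "\<And>t. t \<ge> 0 \<Longrightarrow> norm (\<phi>2 t) \<le> R2"
    and eq2: "\<And>t. t \<ge> 0 \<Longrightarrow> \<phi>2 t = z0 + integral {0..t} (\<lambda>s. G (\<phi>2 s))"
    and t: "t \<ge> 0"
  shows "\<phi>1 t = \<phi>2 t"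
proof -
  have f1: "Psi z0 (Bcontfun (Wf \<phi>1)) = Bcontfun (Wf \<phi>1)" by (rule fp_of_sol[OF cont1 bnd1 eq1])
  have f2: "Psi z0 (Bcontfun (Wf \<phi>2)) = Bcontfun (Wf \<phi>2)" by (rule fp_of_sol[OF cont2 bnd2 eq2])
  have "Bcontfun (Wf \<phi>1) = Bcontfun (Wf \<phi>2)" using Psi_fix[of z0] f1 f2 by metis
  then have "Wf \<phi>1 = Wf \<phi>2"
    using Wf_bcontfun[OF cont1 bnd1] Wf_bcontfun[OF cont2 bnd2] by (metis Bcontfun_inverse)
  then have "Wf \<phi>1 t = Wf \<phi>2 t" by simp
  then show ?thesis unfolding Wf_def using t by simp
qed

lemma sol_of_fp:
  assumes "Psi z0 w = w" "t \<ge> 0"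
  shows "exp (lam * t) *\<^sub>R apply_bcontfun w t = z0 + integral {0..t} (\<lambda>s. G (exp (lam * s) *\<^sub>R apply_bcontfun w s))"
proof -
  have "apply_bcontfun w t = Pf z0 w t" using assms(1) Psi_apply by metis
  then have "apply_bcontfun w t = exp (- lam * t) *\<^sub>R (z0 + integral {0..t} (\<lambda>s. G (exp (lam * s) *\<^sub>R apply_bcontfun w s)))"
    unfolding Pf_def using assms(2) by simp
  then show ?thesis by (simp add: exp_minus)
qed

lemma sol_props:
  assumes sol: "is_sir_solution A \<gamma> z0 sol"
  shows "continuous_on {0..} sol"
    and "\<And>t. t \<ge> 0 \<Longrightarrow> sol t = z0 + integral {0..t} (\<lambda>s. G (sol s))"
    and "\<exists>R. \<forall>t\<ge>0. norm (sol t) \<le> R"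
proof -
  have s0: "sol 0 = z0" and inc: "\<And>t. t \<ge> 0 \<Longrightarrow> sol t \<in> sir_cube"
    and der: "\<And>t. t \<ge> 0 \<Longrightarrow> (sol has_vector_derivative F (sol t)) (at t within {0..})"
    using sol unfolding is_sir_solution_def by auto
  show "continuous_on {0..} sol"
    by (rule continuous_on_vector_derivative) (use der in auto)
  show "sol t = z0 + integral {0..t} (\<lambda>s. G (sol s))" if t: "t \<ge> 0" for t
  proof -
    have "((\<lambda>s. F (sol s)) has_integral (sol t - sol 0)) {0..t}"
      by (rule fundamental_theorem_of_calculus[OF t])
         (auto intro: has_vector_derivative_within_subset[OF der])
    then have "integral {0..t} (\<lambda>s. F (sol s)) = sol t - z0" using s0 by (simp add: integral_unique)
    moreover have "integral {0..t} (\<lambda>s. G (sol s)) = integral {0..t} (\<lambda>s. F (sol s))"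
      by (rule Henstock_Kurzweil_Integration.integral_cong) (simp add: G_eq_F inc)
    ultimately show ?thesis by simp
  qed
  obtain R where R: "\<forall>z\<in>(sir_cube::((real^'n)\<times>(real^'n)) set). norm z \<le> R"
    using compact_imp_bounded[OF compact_sir_cube] unfolding bounded_iff by blast
  show "\<exists>R. \<forall>t\<ge>0. norm (sol t) \<le> R" using R inc by auto
qed

end

lemma at_eq_pos: "(t::real) > 0 \<Longrightarrow> at t within {0..} = at t"
  by (rule at_within_nhd[where S="{0<..}"]) auto

lemma S_sub_cube: "z \<in> sir_S \<Longrightarrow> z \<in> sir_cube"
  by (simp add: sir_S_def)

context sirsys begin

definition Kf where "Kf z i = (\<Sum>j\<in>UNIV. A (cl z) $ i $ j * clamp01 (snd z $ j))"

lemma Kf_nonneg: "Kf z i \<ge> 0"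
proof -
  have "0 \<le> A (cl z) $ i $ j" for j using A_nonneg cl_in_cube[of z] by blast
  then show ?thesis unfolding Kf_def using clamp01_bounds
    by (intro sum_nonneg mult_nonneg_nonneg) auto
qed

lemma G_fst: "fst (G z) $ i = - clamp01 (fst z $ i) * Kf z i"
  by (simp add: G_def sir_field_def cl_def Kf_def)

lemma G_snd: "snd (G z) $ i = clamp01 (fst z $ i) * Kf z i - \<gamma> * clamp01 (snd z $ i)"
  by (simp add: G_def sir_field_def cl_def Kf_def)

lemma existence:
  obtains u where "continuous_on UNIV u"
    "\<And>t. t \<ge> 0 \<Longrightarrow> u t = z0 + integral {0..t} (\<lambda>s. G (u s))"
    "\<And>t. t \<ge> 0 \<Longrightarrow> (u has_vector_derivative G (u t)) (at t within {0..})"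
    "u 0 = z0"
proof -
  obtain w where w: "Psi z0 w = w" using Psi_fix[of z0] by blast
  define u where "u t = exp (lam * t) *\<^sub>R apply_bcontfun w t" for t
  have cont: "continuous_on UNIV u" unfolding u_def
    by (intro continuous_on_scaleR continuous_on_apply_bcontfun) (intro continuous_intros)
  have eq: "u t = z0 + integral {0..t} (\<lambda>s. G (u s))" if "t \<ge> 0" for t
    unfolding u_def using sol_of_fp[OF w that] .
  have hc: "continuous_on UNIV (\<lambda>s. G (u s))"
    by (rule continuous_on_compose2[OF G_cont cont]) auto
  have der: "(u has_vector_derivative G (u t)) (at t within {0..})" if t: "t \<ge> 0" for t
  proof (rule has_vector_derivative_transform_within[OF int_deriv[OF hc t, of z0] zero_less_one])
    show "t \<in> {0..}" using t by simp
    show "z0 + integral {0..x'} (\<lambda>s. G (u s)) = u x'" if "x' \<in> {0..}" "dist x' t < 1" for x'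
      using eq[of x'] that by simp
  qed
  have u0: "u 0 = z0" using eq[of 0] by simp
  show ?thesis using that cont eq der u0 by blast
qed

lemma invariance:
  assumes z0: "z0 \<in> sir_S" and cont: "continuous_on UNIV u"
    and der: "\<And>t. t \<ge> 0 \<Longrightarrow> (u has_vector_derivative G (u t)) (at t within {0..})"
    and u0: "u 0 = z0" and T: "T \<ge> 0"
  shows "u T \<in> sir_S"
proof -
  have dat: "(u has_vector_derivative G (u t)) (at t)" if "t > 0" for t
    using der[of t] that at_eq_pos[OF that] by simp
  have dx: "((\<lambda>s. fst (u s) $ i) has_real_derivative fst (G (u t)) $ i) (at t)" if "t > 0" for t i
    by (rule vd_fst_nth[OF dat[OF that]])
  have dy: "((\<lambda>s. snd (u s) $ i) has_real_derivative snd (G (u t)) $ i) (at t)" if "t > 0" for t i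
    by (rule vd_snd_nth[OF dat[OF that]])
  have cu: "continuous_on {0..T} u" using cont by (rule continuous_on_subset) simp
  have cx: "continuous_on {0..T} (\<lambda>s. fst (u s) $ i)" for i
    by (rule continuous_on_component[OF continuous_on_fst[OF cu]])
  have cy: "continuous_on {0..T} (\<lambda>s. snd (u s) $ i)" for i
    by (rule continuous_on_component[OF continuous_on_snd[OF cu]])
  have z0b: "0 \<le> fst z0 $ i" "fst z0 $ i \<le> 1" "0 \<le> snd z0 $ i" "snd z0 $ i \<le> 1" "fst z0 $ i + snd z0 $ i \<le> 1" for i
    using z0 unfolding sir_S_def sir_cube_def by auto
  have x0: "0 \<le> fst (u T) $ i" for i
  proof (rule barrier[OF T cx])
    show "((\<lambda>s. fst (u s) $ i) has_real_derivative fst (G (u s)) $ i) (at s)" if "0 < s" "s < T" for s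
      using dx that by blast
    show "0 \<le> fst (G (u s)) $ i" if "0 < s" "s < T" "fst (u s) $ i < 0" for s
      using that by (simp add: G_fst clamp01_neg)
    show "0 \<le> fst (u 0) $ i" using u0 z0b by simp
  qed
  have x1: "0 \<le> 1 - fst (u T) $ i" for i
  proof (rule barrier[OF T, where f' = "\<lambda>s. 0 - fst (G (u s)) $ i"])
    show "continuous_on {0..T} (\<lambda>s. 1 - fst (u s) $ i)" by (rule continuous_on_diff[OF continuous_on_const cx])
    show "((\<lambda>s. 1 - fst (u s) $ i) has_real_derivative 0 - fst (G (u s)) $ i) (at s)" if "0 < s" "s < T" for s
      using DERIV_diff[OF DERIV_const dx] that by blast
    show "0 \<le> 0 - fst (G (u s)) $ i" if "0 < s" "s < T" "1 - fst (u s) $ i < 0" for s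
      using Kf_nonneg clamp01_bounds by (simp add: G_fst)
    show "0 \<le> 1 - fst (u 0) $ i" using u0 z0b by simp
  qed
  have y0: "0 \<le> snd (u T) $ i" for i
  proof (rule barrier[OF T cy])
    show "((\<lambda>s. snd (u s) $ i) has_real_derivative snd (G (u s)) $ i) (at s)" if "0 < s" "s < T" for s
      using dy that by blast
    show "0 \<le> snd (G (u s)) $ i" if "0 < s" "s < T" "snd (u s) $ i < 0" for s
      using that Kf_nonneg clamp01_bounds by (simp add: G_snd clamp01_neg)
    show "0 \<le> snd (u 0) $ i" using u0 z0b by simp
  qed
  have xy1: "0 \<le> 1 - fst (u T) $ i - snd (u T) $ i" for i
  proof (rule barrier[OF T, where f' = "\<lambda>s. (0 - fst (G (u s)) $ i) - snd (G (u s)) $ i"])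
    show "continuous_on {0..T} (\<lambda>s. 1 - fst (u s) $ i - snd (u s) $ i)"
      by (rule continuous_on_diff[OF continuous_on_diff[OF continuous_on_const cx] cy])
    show "((\<lambda>s. 1 - fst (u s) $ i - snd (u s) $ i) has_real_derivative (0 - fst (G (u s)) $ i) - snd (G (u s)) $ i) (at s)"
      if "0 < s" "s < T" for s
      using DERIV_diff[OF DERIV_diff[OF DERIV_const dx] dy] that by blast
    show "0 \<le> (0 - fst (G (u s)) $ i) - snd (G (u s)) $ i" if "0 < s" "s < T" "1 - fst (u s) $ i - snd (u s) $ i < 0" for s
      using gamma_pos clamp01_bounds by (simp add: G_fst G_snd)
    show "0 \<le> 1 - fst (u 0) $ i - snd (u 0) $ i" using z0b(5)[of i] unfolding u0 by linarith
  qed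
  show ?thesis unfolding sir_S_def sir_cube_def
    using x0 x1 y0 xy1 by (auto simp: algebra_simps) (smt (verit) x0 xy1)
qed

end

lemma mono_lim:
  fixes f :: "real \<Rightarrow> real"
  assumes mono: "\<And>s t. 0 \<le> s \<Longrightarrow> s \<le> t \<Longrightarrow> f t \<le> f s"
    and pos: "\<And>t. t \<ge> 0 \<Longrightarrow> f t \<ge> 0"
  shows "(f \<longlongrightarrow> Inf (f ` {0..})) at_top" "Inf (f ` {0..}) \<ge> 0" "Inf (f ` {0..}) \<le> f 0"
proof -
  let ?L = "Inf (f ` {0..})"
  have bdd: "bdd_below (f ` {0..})" using pos by (intro bdd_belowI[of _ 0]) auto
  have ne: "f ` {0..} \<noteq> {}" by auto
  have low: "?L \<le> f t" if "t \<ge> 0" for t using that bdd by (intro cInf_lower) auto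
  show "?L \<le> f 0" using low[of 0] by simp
  show "?L \<ge> 0" using pos by (intro cInf_greatest[OF ne]) auto
  show "(f \<longlongrightarrow> ?L) at_top"
  proof (rule order_tendstoI)
    fix a assume "a < ?L"
    then show "eventually (\<lambda>t. a < f t) at_top"
      unfolding eventually_at_top_linorder using low by (intro exI[of _ 0]) (auto intro: less_le_trans)
  next
    fix a assume a: "?L < a"
    obtain x where x: "x \<in> f ` {0..}" "x < a" using cInf_lessD[OF ne a] by blast
    then obtain t0 where t0: "t0 \<ge> 0" "f t0 < a" by auto
    show "eventually (\<lambda>t. f t < a) at_top"
      unfolding eventually_at_top_linorder
      by (rule exI[of _ t0]) (use mono t0 in \<open>auto intro: le_less_trans\<close>)
  qed
qed

context sirsys begin

lemma F_zero_iff: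
  "{z \<in> sir_S. sir_field A \<gamma> z = 0} = {(x, 0) | x. \<forall>i. 0 \<le> x $ i \<and> x $ i \<le> 1}"
proof (intro set_eqI iffI)
  fix z :: "(real^'n) \<times> (real^'n)" assume z: "z \<in> {z \<in> sir_S. sir_field A \<gamma> z = 0}"
  then have zS: "z \<in> sir_S" and Fz: "F z = 0" by auto
  have "snd z $ i = 0" for i
  proof -
    have "fst (F z) $ i = 0" "snd (F z) $ i = 0" using Fz by auto
    then have "\<gamma> * snd z $ i = 0" unfolding F_fst F_snd by linarith
    then show ?thesis using gamma_pos by simp
  qed
  then have "snd z = 0" by (simp add: vec_eq_iff)
  moreover have "\<forall>i. 0 \<le> fst z $ i \<and> fst z $ i \<le> 1" using zS unfolding sir_S_def sir_cube_def by auto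
  ultimately show "z \<in> {(x, 0) | x. \<forall>i. 0 \<le> x $ i \<and> x $ i \<le> 1}"
    unfolding mem_Collect_eq by (intro exI[of _ "fst z"] conjI) (simp_all add: prod_eq_iff)
next
  fix z :: "(real^'n) \<times> (real^'n)" assume "z \<in> {(x, 0) | x. \<forall>i. 0 \<le> x $ i \<and> x $ i \<le> 1}"
  then obtain x where z: "z = (x, 0)" and x: "\<forall>i. 0 \<le> x $ i \<and> x $ i \<le> 1" by auto
  have "z \<in> sir_S" unfolding z sir_S_def sir_cube_def using x by auto
  moreover have "F z = 0" unfolding z by (simp add: sir_field_def prod_eq_iff vec_eq_iff)
  ultimately show "z \<in> {z \<in> sir_S. sir_field A \<gamma> z = 0}" by simp
qed

lemma part_i:
  assumes z0: "z0 \<in> sir_S"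
  shows "\<exists>sol. is_sir_solution A \<gamma> z0 sol
        \<and> (\<forall>sol2. is_sir_solution A \<gamma> z0 sol2 \<longrightarrow> (\<forall>t\<ge>0. sol2 t = sol t))
        \<and> (\<exists>D. (\<forall>t\<ge>0. (sol has_vector_derivative D t) (at t within {0..}))
               \<and> continuous_on {0..} D)
        \<and> (\<forall>t\<ge>0. sol t \<in> sir_S)"
proof -
  obtain u where cont: "continuous_on UNIV u"
    and eq: "\<And>t. t \<ge> 0 \<Longrightarrow> u t = z0 + integral {0..t} (\<lambda>s. G (u s))"
    and der: "\<And>t. t \<ge> 0 \<Longrightarrow> (u has_vector_derivative G (u t)) (at t within {0..})"
    and u0: "u 0 = z0"
    by (rule existence) blast
  have inS: "u t \<in> sir_S" if "t \<ge> 0" for t by (rule invariance[OF z0 cont der u0 that])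
  have GF: "G (u t) = F (u t)" if "t \<ge> 0" for t using inS[OF that] by (simp add: G_eq_F S_sub_cube)
  have derF: "(u has_vector_derivative F (u t)) (at t within {0..})" if "t \<ge> 0" for t
    using der[OF that] GF[OF that] by simp
  have sol: "is_sir_solution A \<gamma> z0 u"
    unfolding is_sir_solution_def
  proof (intro conjI allI impI)
    show "u 0 = z0" by (rule u0)
    fix t :: real assume t: "t \<ge> 0"
    show "u t \<in> sir_cube" by (rule S_sub_cube[OF inS[OF t]])
    show "(u has_vector_derivative F (u t)) (at t within {0..})" by (rule derF[OF t])
  qed
  have uniq: "\<forall>t\<ge>0. sol2 t = u t" if s2: "is_sir_solution A \<gamma> z0 sol2" for sol2
  proof (intro allI impI)
    fix t :: real assume t: "t \<ge> 0"
    obtain R2 where R2: "\<forall>t\<ge>0. norm (sol2 t) \<le> R2" using sol_props(3)[OF s2] by blast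
    obtain R where R: "\<forall>t\<ge>0. norm (u t) \<le> R" using sol_props(3)[OF sol] by blast
    have b2: "\<And>t. t \<ge> 0 \<Longrightarrow> norm (sol2 t) \<le> R2" using R2 by blast
    have b1: "\<And>t. t \<ge> 0 \<Longrightarrow> norm (u t) \<le> R" using R by blast
    show "sol2 t = u t"
      by (rule int_unique[OF sol_props(1)[OF s2] b2 sol_props(2)[OF s2] sol_props(1)[OF sol] b1 sol_props(2)[OF sol] t])
  qed
  have hc: "continuous_on UNIV (\<lambda>s. G (u s))"
    by (rule continuous_on_compose2[OF G_cont cont]) auto
  have Dc: "continuous_on {0..} (\<lambda>t. F (u t))"
    by (rule continuous_on_eq[OF continuous_on_subset[OF hc]]) (auto simp: GF)
  show ?thesis
  proof (rule exI[of _ u], intro conjI)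
    show "is_sir_solution A \<gamma> z0 u" by (rule sol)
    show "\<forall>sol2. is_sir_solution A \<gamma> z0 sol2 \<longrightarrow> (\<forall>t\<ge>0. sol2 t = u t)"
      using uniq by blast
    show "\<exists>D. (\<forall>t\<ge>0. (u has_vector_derivative D t) (at t within {0..})) \<and> continuous_on {0..} D"
      by (intro exI[of _ "\<lambda>t. F (u t)"] conjI allI impI derF Dc)
    show "\<forall>t\<ge>0. u t \<in> sir_S" using inS by blast
  qed
qed

end

lemma restrict_deriv:
  assumes "\<And>t. t \<ge> 0 \<Longrightarrow> (f has_real_derivative f' t) (at t within {0..})"
    and "0 \<le> a" "t \<in> {a..b}"
  shows "(f has_real_derivative f' t) (at t within {a..b})"
  using assms by (intro DERIV_subset[OF assms(1)]) auto

context sirsys begin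

lemma part_rest:
  assumes z0: "z0 \<in> sir_S" and sol: "is_sir_solution A \<gamma> z0 sol"
  shows "(\<forall>i. (\<forall>s t. 0 \<le> s \<longrightarrow> s \<le> t \<longrightarrow> fst (sol t) $ i \<le> fst (sol s) $ i)
          \<and> (fst (sol 0) $ i > 0 \<longleftrightarrow> (\<forall>t\<ge>0. fst (sol t) $ i > 0)))
     \<and> (\<forall>i. snd (sol 0) $ i > 0 \<longrightarrow> (\<forall>t>0. snd (sol t) $ i > 0))
     \<and> (\<exists>xs :: real^'n. (\<forall>i. 0 \<le> xs $ i \<and> xs $ i \<le> fst (sol 0) $ i)
          \<and> (sol \<longlongrightarrow> (xs, 0)) at_top
          \<and> (xs, 0) \<in> {(x, 0) | x. \<forall>i. 0 \<le> x $ i \<and> x $ i \<le> 1})"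
proof -
  have s0: "sol 0 = z0" and inc: "\<And>t. t \<ge> 0 \<Longrightarrow> sol t \<in> sir_cube"
    and der: "\<And>t. t \<ge> 0 \<Longrightarrow> (sol has_vector_derivative F (sol t)) (at t within {0..})"
    using sol unfolding is_sir_solution_def by auto
  define X where "X i t = fst (sol t) $ i" for i t
  define Y where "Y i t = snd (sol t) $ i" for i t
  define K where "K i t = (\<Sum>j\<in>UNIV. A (sol t) $ i $ j * snd (sol t) $ j)" for i t
  have Xb: "0 \<le> X i t" "X i t \<le> 1" if "t \<ge> 0" for i t
    using inc[OF that] unfolding X_def sir_cube_def by auto
  have Yb: "0 \<le> Y i t" "Y i t \<le> 1" if "t \<ge> 0" for i t
    using inc[OF that] unfolding Y_def sir_cube_def by auto
  obtain MA where MA: "MA \<ge> 0" "\<And>z i j. z \<in> sir_cube \<Longrightarrow> \<bar>A z $ i $ j\<bar> \<le> MA" by (rule A_bound) blast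
  define B where "B = real CARD('n) * MA"
  have K0: "0 \<le> K i t" if "t \<ge> 0" for i t
  proof -
    have "0 \<le> A (sol t) $ i $ j" for j using A_nonneg inc[OF that] by blast
    moreover have "0 \<le> snd (sol t) $ j" for j using Yb[OF that] unfolding Y_def by blast
    ultimately show ?thesis unfolding K_def by (intro sum_nonneg mult_nonneg_nonneg) auto
  qed
  have KB: "K i t \<le> B" if "t \<ge> 0" for i t
    unfolding K_def B_def
  proof (rule sum_bounded_above)
    fix j
    have "A (sol t) $ i $ j \<le> MA" using MA(2)[OF inc[OF that]] by (simp add: abs_le_iff)
    moreover have "0 \<le> A (sol t) $ i $ j" using A_nonneg inc[OF that] by blast
    moreover have "0 \<le> snd (sol t) $ j" "snd (sol t) $ j \<le> 1" using Yb[OF that] unfolding Y_def by auto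
    ultimately have "A (sol t) $ i $ j * snd (sol t) $ j \<le> MA * 1" by (intro mult_mono) auto
    then show "A (sol t) $ i $ j * snd (sol t) $ j \<le> MA" by simp
  qed
  have dX: "(X i has_real_derivative - X i t * K i t) (at t within {0..})" if "t \<ge> 0" for i t
    using vd_fst_nth[OF der[OF that], of i] unfolding X_def K_def by (simp add: F_fst)
  have dY: "(Y i has_real_derivative X i t * K i t - \<gamma> * Y i t) (at t within {0..})" if "t \<ge> 0" for i t
    using vd_snd_nth[OF der[OF that], of i] unfolding X_def Y_def K_def by (simp add: F_snd)
  have monoX: "X i t \<le> X i s" if "0 \<le> s" "s \<le> t" for i s t
  proof -
    have "- X i s \<le> - X i t"
    proof (rule deriv_nonneg_mono[of s t "\<lambda>r. - X i r" "\<lambda>r. - (- X i r * K i r)"])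
      show "s \<le> t" by fact
      show "((\<lambda>r. - X i r) has_real_derivative - (- X i r * K i r)) (at r within {s..t})" if "r \<in> {s..t}" for r
        by (rule DERIV_minus[OF restrict_deriv[OF dX \<open>0 \<le> s\<close> that]])
      show "0 \<le> - (- X i r * K i r)" if "r \<in> {s..t}" for r
        using Xb[of r i] K0[of r i] that \<open>0 \<le> s\<close> by simp
    qed
    then show ?thesis by simp
  qed
  have dexp: "((\<lambda>r. exp (c * r)) has_real_derivative exp (c * r) * c) (at r within S)" for c r S
    by (auto intro!: derivative_eq_intros)
  have posX: "X i t > 0" if "X i 0 > 0" "t \<ge> 0" for i t
  proof -
    have "X i 0 * exp (B * 0) \<le> X i t * exp (B * t)"
    proof (rule deriv_nonneg_mono[of 0 t "\<lambda>r. X i r * exp (B * r)" "\<lambda>r. (- X i r * K i r) * exp (B * r) + (exp (B * r) * B) * X i r"])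
      show "0 \<le> t" by fact
      show "((\<lambda>r. X i r * exp (B * r)) has_real_derivative (- X i r * K i r) * exp (B * r) + (exp (B * r) * B) * X i r) (at r within {0..t})"
        if "r \<in> {0..t}" for r
        by (rule DERIV_mult[OF restrict_deriv[OF dX order.refl that] dexp])
      show "0 \<le> (- X i r * K i r) * exp (B * r) + (exp (B * r) * B) * X i r" if "r \<in> {0..t}" for r
      proof -
        have "(- X i r * K i r) * exp (B * r) + (exp (B * r) * B) * X i r = X i r * exp (B * r) * (B - K i r)"
          by (simp add: algebra_simps)
        moreover have "0 \<le> X i r * exp (B * r) * (B - K i r)"
          using Xb[of r i] KB[of r i] that by (intro mult_nonneg_nonneg) auto
        ultimately show ?thesis by simp
      qed
    qed
    then have "0 < X i t * exp (B * t)" using that(1) by simp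
    then show ?thesis by (simp add: zero_less_mult_iff)
  qed
  have posY: "Y i t > 0" if "Y i 0 > 0" "t \<ge> 0" for i t
  proof -
    have "Y i 0 * exp (\<gamma> * 0) \<le> Y i t * exp (\<gamma> * t)"
    proof (rule deriv_nonneg_mono[of 0 t "\<lambda>r. Y i r * exp (\<gamma> * r)" "\<lambda>r. (X i r * K i r - \<gamma> * Y i r) * exp (\<gamma> * r) + (exp (\<gamma> * r) * \<gamma>) * Y i r"])
      show "0 \<le> t" by fact
      show "((\<lambda>r. Y i r * exp (\<gamma> * r)) has_real_derivative (X i r * K i r - \<gamma> * Y i r) * exp (\<gamma> * r) + (exp (\<gamma> * r) * \<gamma>) * Y i r) (at r within {0..t})"
        if "r \<in> {0..t}" for r
        by (rule DERIV_mult[OF restrict_deriv[OF dY order.refl that] dexp])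
      show "0 \<le> (X i r * K i r - \<gamma> * Y i r) * exp (\<gamma> * r) + (exp (\<gamma> * r) * \<gamma>) * Y i r" if "r \<in> {0..t}" for r
      proof -
        have "(X i r * K i r - \<gamma> * Y i r) * exp (\<gamma> * r) + (exp (\<gamma> * r) * \<gamma>) * Y i r = X i r * K i r * exp (\<gamma> * r)"
          by (simp add: algebra_simps)
        moreover have "0 \<le> X i r * K i r * exp (\<gamma> * r)"
          using Xb[of r i] K0[of r i] that by (intro mult_nonneg_nonneg) auto
        ultimately show ?thesis by simp
      qed
    qed
    then have "0 < Y i t * exp (\<gamma> * t)" using that(1) by simp
    then show ?thesis by (simp add: zero_less_mult_iff)
  qed
  define E where "E i t = X i t + Y i t" for i t
  have dE: "(E i has_real_derivative - (\<gamma> * Y i t)) (at t within {0..})" if "t \<ge> 0" for i t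
  proof -
    have "(E i has_real_derivative (- X i t * K i t) + (X i t * K i t - \<gamma> * Y i t)) (at t within {0..})"
      unfolding E_def[abs_def] by (rule DERIV_add[OF dX[OF that] dY[OF that]])
    then show ?thesis by simp
  qed
  have E0: "0 \<le> E i t" if "t \<ge> 0" for i t using Xb[OF that] Yb[OF that] unfolding E_def by (simp add: add_nonneg_nonneg)
  have monoE: "E i t \<le> E i s" if "0 \<le> s" "s \<le> t" for i s t
  proof -
    have "- E i s \<le> - E i t"
    proof (rule deriv_nonneg_mono[of s t "\<lambda>r. - E i r" "\<lambda>r. - (- (\<gamma> * Y i r))"])
      show "s \<le> t" by fact
      show "((\<lambda>r. - E i r) has_real_derivative - (- (\<gamma> * Y i r))) (at r within {s..t})" if "r \<in> {s..t}" for r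
        by (rule DERIV_minus[OF restrict_deriv[OF dE \<open>0 \<le> s\<close> that]])
      show "0 \<le> - (- (\<gamma> * Y i r))" if "r \<in> {s..t}" for r
        using Yb[of r i] gamma_pos that \<open>0 \<le> s\<close> by simp
    qed
    then show ?thesis by simp
  qed
  define LX where "LX i = Inf (X i ` {0..})" for i
  define LE where "LE i = Inf (E i ` {0..})" for i
  have limX: "(X i \<longlongrightarrow> LX i) at_top" "LX i \<ge> 0" "LX i \<le> X i 0" for i
    unfolding LX_def using mono_lim[of "X i"] monoX Xb by auto
  have limE: "(E i \<longlongrightarrow> LE i) at_top" for i
    unfolding LE_def using mono_lim[of "E i"] monoE E0 by auto
  have limY0: "(Y i \<longlongrightarrow> LE i - LX i) at_top" for i
  proof -
    have "((\<lambda>t. E i t - X i t) \<longlongrightarrow> LE i - LX i) at_top" by (intro tendsto_diff limE limX)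
    then show ?thesis unfolding E_def by simp
  qed
  have ell0: "LE i - LX i \<ge> 0" for i
  proof (rule tendsto_lowerbound[OF limY0])
    show "\<forall>\<^sub>F t in at_top. 0 \<le> Y i t" unfolding eventually_at_top_linorder using Yb by blast
  qed simp
  have ell: "LE i - LX i = 0" for i
  proof (rule ccontr)
    assume "LE i - LX i \<noteq> 0"
    then have lp: "LE i - LX i > 0" using ell0[of i] by simp
    define l where "l = LE i - LX i"
    have "\<forall>\<^sub>F t in at_top. l / 2 < Y i t" using order_tendstoD(1)[OF limY0[of i], of "l/2"] lp unfolding l_def by simp
    then obtain T0 where T0: "\<And>t. t \<ge> T0 \<Longrightarrow> l / 2 < Y i t" unfolding eventually_at_top_linorder by blast
    define T where "T = max T0 0"
    have T: "T \<ge> 0" "T \<ge> T0" unfolding T_def by auto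
    define c where "c = \<gamma> * l / 2"
    have c: "c > 0" unfolding c_def using gamma_pos lp l_def by simp
    define t1 where "t1 = T + (E i T + 1) / c"
    have t1: "T \<le> t1" unfolding t1_def using E0[OF T(1), of i] c by simp
    have "- E i T - c * T \<le> - E i t1 - c * t1"
    proof (rule deriv_nonneg_mono[of T t1 "\<lambda>r. - E i r - c * r" "\<lambda>r. - (- (\<gamma> * Y i r)) - c"])
      show "T \<le> t1" by fact
      show "((\<lambda>r. - E i r - c * r) has_real_derivative - (- (\<gamma> * Y i r)) - c) (at r within {T..t1})" if "r \<in> {T..t1}" for r
        by (rule DERIV_diff[OF DERIV_minus[OF restrict_deriv[OF dE T(1) that]] DERIV_cmult_Id])
      show "0 \<le> - (- (\<gamma> * Y i r)) - c" if "r \<in> {T..t1}" for r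
      proof -
        have "l / 2 < Y i r" using T0[of r] that T by simp
        then have "\<gamma> * (l / 2) \<le> \<gamma> * Y i r" using gamma_pos by simp
        then show ?thesis unfolding c_def by simp
      qed
    qed
    moreover have "c * (t1 - T) = E i T + 1" unfolding t1_def using c by simp
    ultimately have "E i t1 \<le> -1" by (simp add: algebra_simps)
    moreover have "E i t1 \<ge> 0" using E0[of t1 i] t1 T by simp
    ultimately show False by simp
  qed
  have limY: "(Y i \<longlongrightarrow> 0) at_top" for i using limY0[of i] ell[of i] by simp
  define xs where "xs = (\<chi> i. LX i)"
  have lim_fst: "((\<lambda>t. fst (sol t)) \<longlongrightarrow> xs) at_top"
    by (rule vec_tendstoI) (use limX(1) in \<open>simp add: xs_def X_def[abs_def]\<close>)
  have lim_snd: "((\<lambda>t. snd (sol t)) \<longlongrightarrow> 0) at_top"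
    by (rule vec_tendstoI) (use limY in \<open>simp add: Y_def[abs_def]\<close>)
  have lim: "(sol \<longlongrightarrow> (xs, 0)) at_top"
    using tendsto_Pair[OF lim_fst lim_snd] by simp
  have xs_b: "0 \<le> xs $ i \<and> xs $ i \<le> fst (sol 0) $ i" for i
    using limX(2,3)[of i] unfolding xs_def X_def by simp
  have xs1: "xs $ i \<le> 1" for i using xs_b[of i] Xb[of 0 i] unfolding X_def by simp
  show ?thesis
  proof (intro conjI allI impI)
    show "fst (sol t) $ i \<le> fst (sol s) $ i" if "0 \<le> s" "s \<le> t" for i s t
      using monoX[OF that] unfolding X_def .
    show "(0 < fst (sol 0) $ i) = (\<forall>t\<ge>0. 0 < fst (sol t) $ i)" for i
      using posX[of i] unfolding X_def by auto
    show "0 < snd (sol t) $ i" if "0 < snd (sol 0) $ i" "0 < t" for i t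
      using posY[of i t] that unfolding Y_def by simp
    show "\<exists>xs :: real^'n. (\<forall>i. 0 \<le> xs $ i \<and> xs $ i \<le> fst (sol 0) $ i)
          \<and> (sol \<longlongrightarrow> (xs, 0)) at_top
          \<and> (xs, 0) \<in> {(x, 0) | x. \<forall>i. 0 \<le> x $ i \<and> x $ i \<le> 1}"
      using xs_b lim xs1 by blast
  qed
qed

end

theorem proposition1:
  fixes A :: "(real^'n) \<times> (real^'n) \<Rightarrow> real^'n^'n"
    and A' :: "(real^'n) \<times> (real^'n) \<Rightarrow> ((real^'n) \<times> (real^'n)) \<Rightarrow>\<^sub>L (real^'n^'n)"
    and \<gamma> :: real
  assumes gamma_pos: "\<gamma> > 0"
    and A_nonneg: "\<forall>z\<in>sir_cube. \<forall>i j. 0 \<le> A z $ i $ j"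
    and A_deriv: "\<forall>z\<in>sir_cube. (A has_derivative blinfun_apply (A' z)) (at z within sir_cube)"
    and A'_cont: "continuous_on sir_cube A'"
  shows
    "(\<forall>z0\<in>sir_S. \<exists>sol. is_sir_solution A \<gamma> z0 sol
        \<and> (\<forall>sol2. is_sir_solution A \<gamma> z0 sol2 \<longrightarrow> (\<forall>t\<ge>0. sol2 t = sol t))
        \<and> (\<exists>D. (\<forall>t\<ge>0. (sol has_vector_derivative D t) (at t within {0..}))
               \<and> continuous_on {0..} D)
        \<and> (\<forall>t\<ge>0. sol t \<in> sir_S))
   \<and> (\<forall>z0\<in>sir_S. \<forall>sol. is_sir_solution A \<gamma> z0 sol \<longrightarrow>
       ((\<forall>i. (\<forall>s t. 0 \<le> s \<longrightarrow> s \<le> t \<longrightarrow> fst (sol t) $ i \<le> fst (sol s) $ i)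
          \<and> (fst (sol 0) $ i > 0 \<longleftrightarrow> (\<forall>t\<ge>0. fst (sol t) $ i > 0)))
     \<and> (\<forall>i. snd (sol 0) $ i > 0 \<longrightarrow> (\<forall>t>0. snd (sol t) $ i > 0))
     \<and> (\<exists>xs :: real^'n. (\<forall>i. 0 \<le> xs $ i \<and> xs $ i \<le> fst (sol 0) $ i)
          \<and> (sol \<longlongrightarrow> (xs, 0)) at_top
          \<and> (xs, 0) \<in> {(x, 0) | x. \<forall>i. 0 \<le> x $ i \<and> x $ i \<le> 1})))
   \<and> {z \<in> sir_S. sir_field A \<gamma> z = 0} = {(x, 0) | x. \<forall>i. 0 \<le> x $ i \<and> x $ i \<le> 1}"
proof -
  interpret sirsys A A' \<gamma>
    by unfold_locales (use gamma_pos A_nonneg A_deriv A'_cont in auto)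
  show ?thesis
  proof (intro conjI)
    show "\<forall>z0\<in>sir_S. \<exists>sol. is_sir_solution A \<gamma> z0 sol
        \<and> (\<forall>sol2. is_sir_solution A \<gamma> z0 sol2 \<longrightarrow> (\<forall>t\<ge>0. sol2 t = sol t))
        \<and> (\<exists>D. (\<forall>t\<ge>0. (sol has_vector_derivative D t) (at t within {0..}))
               \<and> continuous_on {0..} D)
        \<and> (\<forall>t\<ge>0. sol t \<in> sir_S)"
      using part_i by blast
    show "\<forall>z0\<in>sir_S. \<forall>sol. is_sir_solution A \<gamma> z0 sol \<longrightarrow>
       ((\<forall>i. (\<forall>s t. 0 \<le> s \<longrightarrow> s \<le> t \<longrightarrow> fst (sol t) $ i \<le> fst (sol s) $ i)
          \<and> (fst (sol 0) $ i > 0 \<longleftrightarrow> (\<forall>t\<ge>0. fst (sol t) $ i > 0)))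
     \<and> (\<forall>i. snd (sol 0) $ i > 0 \<longrightarrow> (\<forall>t>0. snd (sol t) $ i > 0))
     \<and> (\<exists>xs :: real^'n. (\<forall>i. 0 \<le> xs $ i \<and> xs $ i \<le> fst (sol 0) $ i)
          \<and> (sol \<longlongrightarrow> (xs, 0)) at_top
          \<and> (xs, 0) \<in> {(x, 0) | x. \<forall>i. 0 \<le> x $ i \<and> x $ i \<le> 1}))"
    proof (intro ballI allI impI)
      fix z0 sol assume "z0 \<in> sir_S" "is_sir_solution A \<gamma> z0 sol"
      then show "(\<forall>i. (\<forall>s t. 0 \<le> s \<longrightarrow> s \<le> t \<longrightarrow> fst (sol t) $ i \<le> fst (sol s) $ i)
          \<and> (fst (sol 0) $ i > 0 \<longleftrightarrow> (\<forall>t\<ge>0. fst (sol t) $ i > 0)))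
     \<and> (\<forall>i. snd (sol 0) $ i > 0 \<longrightarrow> (\<forall>t>0. snd (sol t) $ i > 0))
     \<and> (\<exists>xs :: real^'n. (\<forall>i. 0 \<le> xs $ i \<and> xs $ i \<le> fst (sol 0) $ i)
          \<and> (sol \<longlongrightarrow> (xs, 0)) at_top
          \<and> (xs, 0) \<in> {(x, 0) | x. \<forall>i. 0 \<le> x $ i \<and> x $ i \<le> 1})"
        by (rule part_rest)
    qed
    show "{z \<in> sir_S. sir_field A \<gamma> z = 0} = {(x, 0) | x. \<forall>i. 0 \<le> x $ i \<and> x $ i \<le> 1}"
      by (rule F_zero_iff)
  qed
qed

end
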